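(* Let $(T,b)$ be a branched ideal triangulation of $(S,V)$ and let $e$ be an edge of $T$ which is ambiguous and untrapped in $(T,b)$. Let $b'$ be the branching obtained from $b$ by reversing the orientation of $e$. Then $(T,b)$ and $(T,b')$ are connected by a sequence of two $b$-flips.
   Context: $S$ is a compact closed connected surface and $V\subset S$ is a finite set of marked points with $\chi(S)-|V|<0$. An ideal triangulation $T$ of $(S,V)$ is a possibly loose triangulation of $S$ with vertex set $V$, obtained by gluing abstract triangles along abstract edges in pairs. A branching $b$ is an orientation of all edges which on each abstract triangle is induced by a total order of its vertices, edges pointing to the larger endpoint. An edge is trapped if it results from identifying two edges of a single abstract triangle, and untrapped otherwise. An edge $e$ is ambiguous in $(T,b)$ if reversing the orientation of $e$ alone yields a branching. A (naked) flip at an untrapped edge $e$ shared by two abstract triangles forming a quadrilateral replaces $e$ by the other diagonal. A $b$-flip is such a flip together with an orientation of the new diagonal such that, all other edges keeping their orientation, the result is branched. *)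

theory Defs
  imports Main
begin

text \<open>
Combinatorial model of an ideal triangulation of a closed surface.
Corners are elements of a type 'c.  An abstract triangle is a 3-element set of
corners (its three corners); distinct triangles have disjoint corner sets.
A dart (x,y) is an oriented side of an abstract triangle, from corner x to corner y.
The gluing maps each dart to the dart it is identified with (x goes to the first
component, y to the second).  Vertices (the marked set V) are the classes of corners
under the identifications; the surface S is the quotient space.
\<close>

record 'c triang =
  tris :: "'c set set"
  glue :: "'c \<times> 'c \<Rightarrow> 'c \<times> 'c"

definition darts :: "'c triang \<Rightarrow> ('c \<times> 'c) set" where
  "darts T = {(x, y). x \<noteq> y \<and> (\<exists>D\<in>tris T. x \<in> D \<and> y \<in> D)}"

definition adjacent :: "'c triang \<Rightarrow> 'c set \<Rightarrow> 'c set \<Rightarrow> bool" where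
  "adjacent T D D' \<longleftrightarrow> (\<exists>z\<in>darts T. fst z \<in> D \<and> fst (glue T z) \<in> D')"

definition wf_triang :: "'c triang \<Rightarrow> bool" where
  "wf_triang T \<longleftrightarrow>
     finite (tris T) \<and> tris T \<noteq> {} \<and>
     (\<forall>D\<in>tris T. card D = 3) \<and>
     (\<forall>D\<in>tris T. \<forall>D'\<in>tris T. D \<noteq> D' \<longrightarrow> D \<inter> D' = {}) \<and>
     (\<forall>z\<in>darts T. glue T z \<in> darts T \<and> glue T (glue T z) = z \<and>
        glue T (prod.swap z) = prod.swap (glue T z) \<and>
        glue T z \<noteq> z \<and> glue T z \<noteq> prod.swap z) \<and>
     (\<forall>D\<in>tris T. \<forall>D'\<in>tris T. (D, D') \<in> {(X, Y). adjacent T X Y}\<^sup>*)"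

definition is_orientation :: "'c triang \<Rightarrow> ('c \<times> 'c) set \<Rightarrow> bool" where
  "is_orientation T Ot \<longleftrightarrow> Ot \<subseteq> darts T \<and>
     (\<forall>z\<in>darts T. (z \<in> Ot) \<noteq> (prod.swap z \<in> Ot)) \<and>
     (\<forall>z\<in>darts T. z \<in> Ot \<longleftrightarrow> glue T z \<in> Ot)"

definition is_branching :: "'c triang \<Rightarrow> ('c \<times> 'c) set \<Rightarrow> bool" where
  "is_branching T Ot \<longleftrightarrow> is_orientation T Ot \<and>
     (\<forall>D\<in>tris T. \<exists>r :: 'c \<Rightarrow> nat. inj_on r D \<and>
        (\<forall>x\<in>D. \<forall>y\<in>D. x \<noteq> y \<longrightarrow> ((x, y) \<in> Ot \<longleftrightarrow> r x < r y)))"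

definition edge_darts :: "'c triang \<Rightarrow> 'c \<times> 'c \<Rightarrow> ('c \<times> 'c) set" where
  "edge_darts T z = {z, prod.swap z, glue T z, prod.swap (glue T z)}"

definition reverse_edge :: "'c triang \<Rightarrow> ('c \<times> 'c) set \<Rightarrow> 'c \<times> 'c \<Rightarrow> ('c \<times> 'c) set" where
  "reverse_edge T Ot z = (Ot - edge_darts T z) \<union> (edge_darts T z - Ot)"

definition trapped :: "'c triang \<Rightarrow> 'c \<times> 'c \<Rightarrow> bool" where
  "trapped T z \<longleftrightarrow> (\<exists>D\<in>tris T. fst z \<in> D \<and> fst (glue T z) \<in> D)"

definition ambiguous :: "'c triang \<Rightarrow> ('c \<times> 'c) set \<Rightarrow> 'c \<times> 'c \<Rightarrow> bool" where
  "ambiguous T Ot z \<longleftrightarrow> is_branching T (reverse_edge T Ot z)"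

text \<open>Renaming of the outer sides of the quadrilateral.  Old triangles {a,p,q} and
{c,p',q'} glued along (p,q) ~ (p',q'); new triangles {xa,xp,xc} and {ya,yq,yc},
new diagonal from a to c.\<close>

definition flip_ren ::
  "'c \<Rightarrow> 'c \<Rightarrow> 'c \<Rightarrow> 'c \<Rightarrow> 'c \<Rightarrow> 'c \<Rightarrow> 'c \<Rightarrow> 'c \<Rightarrow> 'c \<Rightarrow> 'c \<Rightarrow> 'c \<Rightarrow> 'c \<Rightarrow> 'c \<times> 'c \<Rightarrow> 'c \<times> 'c" where
  "flip_ren a p q c p' q' xa xp xc ya yq yc w =
     (if w = (a, p) then (xa, xp) else if w = (p, a) then (xp, xa)
      else if w = (a, q) then (ya, yq) else if w = (q, a) then (yq, ya)
      else if w = (c, p') then (xc, xp) else if w = (p', c) then (xp, xc)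
      else if w = (c, q') then (yc, yq) else if w = (q', c) then (yq, yc)
      else w)"

text \<open>T2 is obtained from T by the (naked) flip at the edge of dart z; rho maps the darts
of T not on the flipped edge to the corresponding darts of T2.\<close>

definition naked_flip ::
  "'c triang \<Rightarrow> 'c \<times> 'c \<Rightarrow> 'c triang \<Rightarrow> ('c \<times> 'c \<Rightarrow> 'c \<times> 'c) \<Rightarrow> bool" where
  "naked_flip T z T2 rho \<longleftrightarrow>
     (\<exists>p q a c p' q' xa xp xc ya yq yc.
        z = (p, q) \<and> {a, p, q} \<in> tris T \<and> a \<notin> {p, q} \<and> p \<noteq> q \<and>
        glue T (p, q) = (p', q') \<and> {c, p', q'} \<in> tris T \<and> c \<notin> {p', q'} \<and>
        {a, p, q} \<noteq> {c, p', q'} \<and>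
        distinct [xa, xp, xc, ya, yq, yc] \<and>
        {xa, xp, xc, ya, yq, yc} \<inter> \<Union>(tris T - {{a, p, q}, {c, p', q'}}) = {} \<and>
        tris T2 = (tris T - {{a, p, q}, {c, p', q'}}) \<union> {{xa, xp, xc}, {ya, yq, yc}} \<and>
        rho = flip_ren a p q c p' q' xa xp xc ya yq yc \<and>
        (\<forall>w\<in>darts T - edge_darts T z. glue T2 (rho w) = rho (glue T w)) \<and>
        glue T2 (xa, xc) = (ya, yc) \<and> glue T2 (xc, xa) = (yc, ya) \<and>
        glue T2 (ya, yc) = (xa, xc) \<and> glue T2 (yc, ya) = (xc, xa))"

definition b_flip ::
  "'c triang \<Rightarrow> ('c \<times> 'c) set \<Rightarrow> 'c triang \<Rightarrow> ('c \<times> 'c) set \<Rightarrow> bool" where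
  "b_flip T Ot T2 Ot2 \<longleftrightarrow>
     (\<exists>z rho. z \<in> darts T \<and> \<not> trapped T z \<and> naked_flip T z T2 rho \<and>
        is_branching T2 Ot2 \<and>
        (\<forall>w\<in>darts T - edge_darts T z. w \<in> Ot \<longleftrightarrow> rho w \<in> Ot2))"

end

theory Submission
  imports Defs
begin

lemma card3_obtain:
  assumes "card D = 3" "p \<in> D" "q \<in> D" "p \<noteq> q"
  shows "\<exists>a. D = {a,p,q} \<and> a \<notin> {p,q}"
proof -
  have fin: "finite D" using assms(1) by (metis card.infinite zero_neq_numeral)
  have sub: "{p,q} \<subseteq> D" using assms(2,3) by blast
  have "card (D - {p,q}) = 1" using card_Diff_subset[OF _ sub] assms(1,4) by simp
  then obtain a where a: "D - {p,q} = {a}" by (rule card_1_singletonE)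
  then have "D = {a,p,q}" using sub by blast
  moreover have "a \<notin> {p,q}" using a by blast
  ultimately show ?thesis by blast
qed

lemma flip_ren_id:
  "fst w \<notin> {a,p,q,c,p',q'} \<Longrightarrow> flip_ren a p q c p' q' xa xp xc ya yq yc w = w"
  by (cases w) (auto simp: flip_ren_def)

lemma tri_branch:
  assumes "x \<noteq> y" "y \<noteq> z" "x \<noteq> z"
    and "((x,y)\<in>R) \<noteq> ((y,x)\<in>R)" "((y,z)\<in>R) \<noteq> ((z,y)\<in>R)" "((x,z)\<in>R) \<noteq> ((z,x)\<in>R)"
    and "\<not> ((x,y)\<in>R \<and> (y,z)\<in>R \<and> (z,x)\<in>R)" "\<not> ((x,z)\<in>R \<and> (z,y)\<in>R \<and> (y,x)\<in>R)"
  shows "\<exists>r :: 'a \<Rightarrow> nat. inj_on r {x,y,z} \<and>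
        (\<forall>u\<in>{x,y,z}. \<forall>v\<in>{x,y,z}. u \<noteq> v \<longrightarrow> ((u, v) \<in> R \<longleftrightarrow> r u < r v))"
proof -
  define ix :: nat where "ix = (if (y,x)\<in>R then 1 else 0) + (if (z,x)\<in>R then 1 else 0)"
  define iy :: nat where "iy = (if (x,y)\<in>R then 1 else 0) + (if (z,y)\<in>R then 1 else 0)"
  define iz :: nat where "iz = (if (x,z)\<in>R then 1 else 0) + (if (y,z)\<in>R then 1 else 0)"
  define r where "r = (\<lambda>u. if u = x then ix else if u = y then iy else iz)"
  have "ix \<noteq> iy" "iy \<noteq> iz" "ix \<noteq> iz"
    "((x,y)\<in>R \<longleftrightarrow> ix < iy)" "((y,x)\<in>R \<longleftrightarrow> iy < ix)"
    "((x,z)\<in>R \<longleftrightarrow> ix < iz)" "((z,x)\<in>R \<longleftrightarrow> iz < ix)"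
    "((y,z)\<in>R \<longleftrightarrow> iy < iz)" "((z,y)\<in>R \<longleftrightarrow> iz < iy)"
    using assms unfolding ix_def iy_def iz_def
    by (cases "(x,y)\<in>R"; cases "(y,z)\<in>R"; cases "(x,z)\<in>R"; simp)+
  note h = this
  have "inj_on r {x,y,z}" using h assms(1-3) by (simp add: r_def inj_on_def)
  moreover have "\<forall>u\<in>{x,y,z}. \<forall>v\<in>{x,y,z}. u \<noteq> v \<longrightarrow> ((u, v) \<in> R \<longleftrightarrow> r u < r v)"
    using h assms(1-3) by (simp add: r_def)
  ultimately show ?thesis by blast
qed


theorem lemma2p4:
  fixes T :: "'c triang" and b :: "('c \<times> 'c) set" and e :: "'c \<times> 'c"
  assumes "wf_triang T"
    and "is_branching T b"
    and "e \<in> darts T"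
    and "ambiguous T b e"
    and "\<not> trapped T e"
  shows "\<exists>T1 b1. b_flip T b T1 b1 \<and> b_flip T1 b1 T (reverse_edge T b e)"
proof -
  obtain p q where e: "e = (p,q)" by (cases e)
  note wfd = assms(1)[unfolded wf_triang_def]
  have card3: "\<And>D. D\<in>tris T \<Longrightarrow> card D = 3" using wfd by blast
  have disj: "\<And>D D'. D\<in>tris T \<Longrightarrow> D'\<in>tris T \<Longrightarrow> D\<noteq>D' \<Longrightarrow> D\<inter>D' = {}" using wfd by blast
  have gl: "\<And>z. z\<in>darts T \<Longrightarrow> glue T z \<in> darts T \<and> glue T (glue T z) = z \<and> glue T (prod.swap z) = prod.swap (glue T z)"
    using wfd by blast
  from assms(3) e obtain A where A: "A \<in> tris T" "p\<in>A" "q\<in>A" and pq: "p\<noteq>q" by (auto simp: darts_def)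
  obtain a where Aeq: "A = {a,p,q}" "a\<notin>{p,q}" using card3_obtain[OF card3[OF A(1)] A(2,3) pq] by blast
  obtain p' q' where g: "glue T (p,q) = (p',q')" by (cases "glue T (p,q)")
  have pqd: "(p,q) \<in> darts T" using assms(3) e by simp
  have pqd': "(p',q') \<in> darts T" using gl[OF pqd] g by simp
  then obtain C where C: "C\<in>tris T" "p'\<in>C" "q'\<in>C" and pq': "p'\<noteq>q'" by (auto simp: darts_def)
  obtain c where Ceq: "C = {c,p',q'}" "c\<notin>{p',q'}" using card3_obtain[OF card3[OF C(1)] C(2,3) pq'] by blast
  have AC: "A \<noteq> C" using assms(5) e g A C unfolding trapped_def by auto
  have ACd: "A \<inter> C = {}" using disj A C AC by blast
  have dist: "distinct [a,p,q,c,p',q']" using ACd Aeq Ceq pq pq' by auto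
  then have neq: "a\<noteq>p" "a\<noteq>q" "a\<noteq>c" "a\<noteq>p'" "a\<noteq>q'" "p\<noteq>q" "p\<noteq>c" "p\<noteq>p'" "p\<noteq>q'"
    "q\<noteq>c" "q\<noteq>p'" "q\<noteq>q'" "c\<noteq>p'" "c\<noteq>q'" "p'\<noteq>q'"
    "p\<noteq>a" "q\<noteq>a" "c\<noteq>a" "p'\<noteq>a" "q'\<noteq>a" "q\<noteq>p" "c\<noteq>p" "p'\<noteq>p" "q'\<noteq>p"
    "c\<noteq>q" "p'\<noteq>q" "q'\<noteq>q" "p'\<noteq>c" "q'\<noteq>c" "q'\<noteq>p'" by auto
  define Oth where "Oth = tris T - {A,C}"
  have oth: "\<And>D x. D\<in>Oth \<Longrightarrow> x\<in>D \<Longrightarrow> x \<notin> {a,p,q,c,p',q'}"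
  proof -
    fix D x assume "D\<in>Oth" "x\<in>D"
    then have "D \<inter> A = {}" "D \<inter> C = {}" using disj A C unfolding Oth_def by blast+
    then show "x \<notin> {a,p,q,c,p',q'}" using \<open>x\<in>D\<close> Aeq Ceq by blast
  qed
  have trisT: "tris T = Oth \<union> {A,C}" using A C unfolding Oth_def by blast
  have g2: "glue T (q,p) = (q',p')" using gl[OF pqd] g by simp
  have g3: "glue T (p',q') = (p,q)" using gl[OF pqd] g by simp
  have g4: "glue T (q',p') = (q,p)" using gl[OF pqd'] g3 by simp
  define E where "E = {(p,q),(q,p),(p',q'),(q',p')}"
  have edE: "edge_darts T e = E" using e g unfolding edge_darts_def E_def by auto
  define X where "X = {a,p,c}"
  define Y where "Y = {q,p',q'}"
  define E1 where "E1 = {(a,c),(c,a),(q,q'),(q',q)}"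
  define rho where "rho = flip_ren a p q c p' q' a p c q p' q'"
  define rho2 where "rho2 = flip_ren p a c p' q q' p a q p' c q'"
  define g1 where "g1 = (\<lambda>w. if w=(a,c) then (q,q') else if w=(c,a) then (q',q) else if w=(q,q') then (a,c)
       else if w=(q',q) then (c,a) else rho (glue T (rho2 w)))"
  define T1 where "T1 = \<lparr>tris = Oth \<union> {X,Y}, glue = g1\<rparr>"
  define b1 where "b1 = {w \<in> darts T1. if w\<in>E1 then (w\<in>{(a,c),(q,q')} \<longleftrightarrow> (a,p)\<in>b) else rho2 w \<in> b}"
  define S8 where "S8 = {(a,p),(p,a),(a,q),(q,a),(c,p'),(p',c),(c,q'),(q',c)}"
  define S8' where "S8' = {(a,p),(p,a),(p,c),(c,p),(q,p'),(p',q),(p',q'),(q',p')}"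
  have trisT1: "tris T1 = Oth \<union> {X,Y}" "glue T1 = g1" unfolding T1_def by simp_all
  have clsT: "\<And>w. w \<in> darts T - E \<Longrightarrow> w \<in> S8 \<or> (\<exists>D\<in>Oth. fst w\<in>D \<and> snd w\<in>D)"
  proof -
    fix w assume w: "w \<in> darts T - E"
    obtain x y where xy: "w = (x,y)" by (cases w)
    from w obtain D where D: "D \<in> tris T" "x \<in> D" "y \<in> D" "x \<noteq> y" "(x,y) \<notin> E" unfolding darts_def xy by auto
    consider "D = A" | "D = C" | "D \<in> Oth" using D(1) trisT by blast
    then show "w \<in> S8 \<or> (\<exists>D\<in>Oth. fst w\<in>D \<and> snd w\<in>D)"
    proof cases
      case 1 then show ?thesis using D unfolding xy Aeq S8_def E_def by auto
    next
      case 2 then show ?thesis using D unfolding xy Ceq S8_def E_def by auto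
    next
      case 3 then show ?thesis using D unfolding xy by auto
    qed
  qed
  have clsT1: "\<And>w. w \<in> darts T1 - E1 \<Longrightarrow> w \<in> S8' \<or> (\<exists>D\<in>Oth. fst w\<in>D \<and> snd w\<in>D)"
  proof -
    fix w assume w: "w \<in> darts T1 - E1"
    obtain x y where xy: "w = (x,y)" by (cases w)
    from w obtain D where D: "D \<in> tris T1" "x \<in> D" "y \<in> D" "x \<noteq> y" "(x,y) \<notin> E1" unfolding darts_def xy by auto
    consider "D = X" | "D = Y" | "D \<in> Oth" using D(1) trisT1 by blast
    then show "w \<in> S8' \<or> (\<exists>D\<in>Oth. fst w\<in>D \<and> snd w\<in>D)"
    proof cases
      case 1 then show ?thesis using D unfolding xy X_def S8'_def E1_def by auto
    next
      case 2 then show ?thesis using D unfolding xy Y_def S8'_def E1_def by auto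
    next
      case 3 then show ?thesis using D unfolding xy by auto
    qed
  qed
  have S8d: "S8 \<subseteq> darts T - E" unfolding darts_def trisT E_def S8_def Aeq Ceq using neq by auto
  have S8'd: "S8' \<subseteq> darts T1 - E1" unfolding darts_def trisT1 E1_def S8'_def X_def Y_def using neq by auto
  have othd: "\<And>w D. D\<in>Oth \<Longrightarrow> fst w\<in>D \<Longrightarrow> snd w\<in>D \<Longrightarrow> fst w \<noteq> snd w \<Longrightarrow> w \<in> darts T - E \<and> w \<in> darts T1 - E1 \<and> rho w = w \<and> rho2 w = w"
  proof -
    fix w D assume h: "D\<in>Oth" "fst w\<in>D" "snd w\<in>D" "fst w \<noteq> snd w"
    then have "fst w \<notin> {a,p,q,c,p',q'}" using oth by blast
    then show "w \<in> darts T - E \<and> w \<in> darts T1 - E1 \<and> rho w = w \<and> rho2 w = w"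
    proof (intro conjI)
      have "D \<in> tris T" "D \<in> tris T1" using h(1) trisT trisT1 by auto
      then have "w \<in> darts T" "w \<in> darts T1" using h unfolding darts_def by (cases w; auto)+
      moreover have "w \<notin> E" "w \<notin> E1" using \<open>fst w \<notin> {a,p,q,c,p',q'}\<close> unfolding E_def E1_def by auto
      ultimately show "w \<in> darts T - E" "w \<in> darts T1 - E1" by auto
      show "rho w = w" unfolding rho_def by (rule flip_ren_id) fact
      have "fst w \<notin> {p,a,c,p',q,q'}" using \<open>fst w \<notin> {a,p,q,c,p',q'}\<close> by auto
      then show "rho2 w = w" unfolding rho2_def by (rule flip_ren_id)
    qed
  qed
  have rhoS: "rho (a,p) = (a,p)" "rho (p,a) = (p,a)" "rho (a,q) = (q,p')" "rho (q,a) = (p',q)"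
     "rho (c,p') = (c,p)" "rho (p',c) = (p,c)" "rho (c,q') = (q',p')" "rho (q',c) = (p',q')"
    unfolding rho_def flip_ren_def using neq by simp_all
  have rho2S: "rho2 (a,p) = (a,p)" "rho2 (p,a) = (p,a)" "rho2 (q,p') = (a,q)" "rho2 (p',q) = (q,a)"
     "rho2 (c,p) = (c,p')" "rho2 (p,c) = (p',c)" "rho2 (q',p') = (c,q')" "rho2 (p',q') = (q',c)"
    unfolding rho2_def flip_ren_def using neq by simp_all
  have F1: "\<And>w. w \<in> darts T - E \<Longrightarrow> rho w \<in> darts T1 - E1 \<and> rho2 (rho w) = w"
  proof -
    fix w assume w: "w \<in> darts T - E"
    from clsT[OF w] show "rho w \<in> darts T1 - E1 \<and> rho2 (rho w) = w"
    proof
      assume "w \<in> S8" then show ?thesis using S8'd rhoS rho2S unfolding S8_def S8'_def by auto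
    next
      assume "\<exists>D\<in>Oth. fst w\<in>D \<and> snd w\<in>D"
      then show ?thesis using othd w unfolding darts_def by auto
    qed
  qed
  have F2: "\<And>w. w \<in> darts T1 - E1 \<Longrightarrow> rho2 w \<in> darts T - E \<and> rho (rho2 w) = w"
  proof -
    fix w assume w: "w \<in> darts T1 - E1"
    from clsT1[OF w] show "rho2 w \<in> darts T - E \<and> rho (rho2 w) = w"
    proof
      assume "w \<in> S8'" then show ?thesis using S8d rhoS rho2S unfolding S8_def S8'_def by auto
    next
      assume "\<exists>D\<in>Oth. fst w\<in>D \<and> snd w\<in>D"
      then show ?thesis using othd w unfolding darts_def by auto
    qed
  qed
  have F3: "\<And>w. w \<in> darts T - E \<Longrightarrow> glue T w \<in> darts T - E"
  proof -
    fix w assume w: "w \<in> darts T - E"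
    have "glue T w \<in> darts T" "glue T (glue T w) = w" using gl w by auto
    then show "glue T w \<in> darts T - E" using w g g2 g3 g4 unfolding E_def by auto
  qed
  have g1E: "\<And>w. w \<notin> E1 \<Longrightarrow> g1 w = rho (glue T (rho2 w))" unfolding g1_def E1_def by auto
  have E1d: "E1 \<subseteq> darts T1" unfolding darts_def trisT1 E1_def X_def Y_def using neq by auto
  have b1E: "\<And>w. w \<in> darts T1 - E1 \<Longrightarrow> w \<in> b1 \<longleftrightarrow> rho2 w \<in> b" unfolding b1_def by auto
  note br = assms(2)[unfolded is_branching_def is_orientation_def]
  have amb: "(a,p)\<in>b \<longleftrightarrow> (a,q)\<in>b"
  proof -
    define b' where "b' = reverse_edge T b e"
    have b'm: "\<And>w. w \<in> b' \<longleftrightarrow> (w \<in> b \<longleftrightarrow> w \<notin> E)" unfolding b'_def reverse_edge_def edE by auto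
    note br' = assms(4)[unfolded ambiguous_def is_branching_def, folded b'_def]
    obtain r :: "'c \<Rightarrow> nat" where r: "\<forall>x\<in>A. \<forall>y\<in>A. x \<noteq> y \<longrightarrow> ((x, y) \<in> b \<longleftrightarrow> r x < r y)" "inj_on r A" using br A(1) by blast
    obtain r' :: "'c \<Rightarrow> nat" where r': "\<forall>x\<in>A. \<forall>y\<in>A. x \<noteq> y \<longrightarrow> ((x, y) \<in> b' \<longleftrightarrow> r' x < r' y)" "inj_on r' A" using br' A(1) by blast
    have Am: "a\<in>A" "p\<in>A" "q\<in>A" using Aeq by auto
    note R = r(1)[rule_format] and R' = r'(1)[rule_format]
    have i: "(a,p)\<in>b \<longleftrightarrow> r a < r p" "(a,q)\<in>b \<longleftrightarrow> r a < r q" "(q,p)\<in>b \<longleftrightarrow> r q < r p" "(p,q)\<in>b \<longleftrightarrow> r p < r q"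
      using R[OF Am(1) Am(2)] R[OF Am(1) Am(3)] R[OF Am(3) Am(2)] R[OF Am(2) Am(3)] neq by auto
    have i2: "r a \<noteq> r q" "r a \<noteq> r p" using inj_onD[OF r(2) _ Am(1) Am(3)] inj_onD[OF r(2) _ Am(1) Am(2)] neq by auto
    have E': "(a,p) \<notin> E" "(a,q) \<notin> E" "(p,q) \<in> E" "(q,p) \<in> E" unfolding E_def using neq by auto
    have i': "(a,p)\<in>b \<longleftrightarrow> r' a < r' p" "(a,q)\<in>b \<longleftrightarrow> r' a < r' q" "(q,p)\<notin>b \<longleftrightarrow> r' q < r' p" "(p,q)\<notin>b \<longleftrightarrow> r' p < r' q"
      using R'[OF Am(1) Am(2)] R'[OF Am(1) Am(3)] R'[OF Am(3) Am(2)] R'[OF Am(2) Am(3)] neq b'm E' by auto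
    have i2': "r' a \<noteq> r' q" "r' a \<noteq> r' p" using inj_onD[OF r'(2) _ Am(1) Am(3)] inj_onD[OF r'(2) _ Am(1) Am(2)] neq by auto
    show ?thesis using i i' i2 i2' by auto
  qed
  have bsw: "\<And>z. z \<in> darts T \<Longrightarrow> (z \<in> b) \<noteq> (prod.swap z \<in> b)" using br by blast
  have bgl: "\<And>z. z \<in> darts T \<Longrightarrow> (z \<in> b) \<longleftrightarrow> (glue T z \<in> b)" using br by blast
  have bsub: "b \<subseteq> darts T" using br by blast
  have dist2: "distinct [p,a,c,p',q,q']" using dist by auto
  have swd1: "\<And>z. z \<in> darts T1 \<Longrightarrow> prod.swap z \<in> darts T1" unfolding darts_def by auto
  have S8'm: "(a,p)\<in>darts T1 - E1" "(p,a)\<in>darts T1 - E1" "(p,c)\<in>darts T1 - E1" "(c,p)\<in>darts T1 - E1"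
     "(q,p')\<in>darts T1 - E1" "(p',q)\<in>darts T1 - E1" "(p',q')\<in>darts T1 - E1" "(q',p')\<in>darts T1 - E1"
    using S8'd unfolding S8'_def insert_subset by simp_all
  have b1v: "(a,p)\<in>b1 \<longleftrightarrow> (a,p)\<in>b" "(p,a)\<in>b1 \<longleftrightarrow> (p,a)\<in>b" "(p,c)\<in>b1 \<longleftrightarrow> (p',c)\<in>b"
     "(c,p)\<in>b1 \<longleftrightarrow> (c,p')\<in>b" "(q,p')\<in>b1 \<longleftrightarrow> (a,q)\<in>b" "(p',q)\<in>b1 \<longleftrightarrow> (q,a)\<in>b"
     "(p',q')\<in>b1 \<longleftrightarrow> (q',c)\<in>b" "(q',p')\<in>b1 \<longleftrightarrow> (c,q')\<in>b"
    using b1E[OF S8'm(1)] b1E[OF S8'm(2)] b1E[OF S8'm(3)] b1E[OF S8'm(4)]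
      b1E[OF S8'm(5)] b1E[OF S8'm(6)] b1E[OF S8'm(7)] b1E[OF S8'm(8)] rho2S by simp_all
  have E1m: "(a,c)\<in>darts T1" "(c,a)\<in>darts T1" "(q,q')\<in>darts T1" "(q',q)\<in>darts T1"
    using E1d unfolding E1_def insert_subset by simp_all
  have b1d: "(a,c)\<in>b1 \<longleftrightarrow> (a,p)\<in>b" "(c,a)\<in>b1 \<longleftrightarrow> (a,p)\<notin>b"
     "(q,q')\<in>b1 \<longleftrightarrow> (a,p)\<in>b" "(q',q)\<in>b1 \<longleftrightarrow> (a,p)\<notin>b"
    unfolding b1_def using E1m neq by (simp_all add: E1_def)
  have S8m: "(a,p) \<in> darts T" "(p',c) \<in> darts T" "(a,q) \<in> darts T" "(q',c) \<in> darts T"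
    using S8d unfolding S8_def insert_subset by simp_all
  have ob: "((a,p)\<in>b) \<noteq> ((p,a)\<in>b)" "((p',c)\<in>b) \<noteq> ((c,p')\<in>b)"
     "((a,q)\<in>b) \<noteq> ((q,a)\<in>b)" "((q',c)\<in>b) \<noteq> ((c,q')\<in>b)"
    using bsw[OF S8m(1)] bsw[OF S8m(2)] bsw[OF S8m(3)] bsw[OF S8m(4)] by simp_all
  have Bor: "is_orientation T1 b1"
    unfolding is_orientation_def
  proof (intro conjI ballI)
    show "b1 \<subseteq> darts T1" unfolding b1_def by auto
  next
    fix z assume z: "z \<in> darts T1"
    show "(z \<in> b1) \<noteq> (prod.swap z \<in> b1)"
    proof (cases "z \<in> E1")
      case True then show ?thesis using z swd1[OF z] neq unfolding b1_def E1_def by auto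
    next
      case False
      then have sz: "prod.swap z \<notin> E1" unfolding E1_def by (cases z) auto
      have rs: "rho2 (prod.swap z) = prod.swap (rho2 z)"
      proof -
        have "z \<in> S8' \<or> (\<exists>D\<in>Oth. fst z\<in>D \<and> snd z\<in>D)" using clsT1[of z] z False by blast
        then show ?thesis
      proof
        assume "z \<in> S8'"
        then show ?thesis unfolding S8'_def using rho2S by auto
      next
        assume "\<exists>D\<in>Oth. fst z\<in>D \<and> snd z\<in>D"
        then obtain D where D: "D\<in>Oth" "fst z\<in>D" "snd z\<in>D" by blast
        have "fst z \<noteq> snd z" using z unfolding darts_def by auto
        then have "rho2 z = z" "rho2 (prod.swap z) = prod.swap z" using othd[OF D] othd[OF D(1), of "prod.swap z"] D by auto
        then show ?thesis by simp
      qed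
      qed
      have z1: "z \<in> b1 \<longleftrightarrow> rho2 z \<in> b" using b1E[of z] z False by simp
      have z2: "prod.swap z \<in> b1 \<longleftrightarrow> prod.swap (rho2 z) \<in> b" using b1E[of "prod.swap z"] swd1[OF z] sz rs by simp
      have "rho2 z \<in> darts T" using F2[of z] z False by simp
      then show ?thesis using z1 z2 bsw by simp
    qed
  next
    fix z assume z: "z \<in> darts T1"
    show "(z \<in> b1) \<longleftrightarrow> (glue T1 z \<in> b1)"
    proof (cases "z \<in> E1")
      case True
      then consider "z=(a,c)" | "z=(c,a)" | "z=(q,q')" | "z=(q',q)" unfolding E1_def by blast
      then show ?thesis by cases (simp_all add: trisT1 g1_def b1d neq)
    next
      case False
      define u where "u = rho2 z"
      have u: "u \<in> darts T - E" "rho u = z" using F2[of z] z False unfolding u_def by auto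
      have gu: "glue T u \<in> darts T - E" using F3 u(1) by blast
      have z1: "z \<in> b1 \<longleftrightarrow> u \<in> b" using b1E[of z] z False unfolding u_def by simp
      have gz: "glue T1 z = rho (glue T u)" using g1E[OF False] trisT1 unfolding u_def by simp
      have "rho (glue T u) \<in> darts T1 - E1" "rho2 (rho (glue T u)) = glue T u" using F1[OF gu] by simp_all
      then have "glue T1 z \<in> b1 \<longleftrightarrow> glue T u \<in> b" using b1E gz by simp
      moreover have "u \<in> b \<longleftrightarrow> glue T u \<in> b" using bgl u(1) by blast
      ultimately show ?thesis using z1 by simp
    qed
  qed
  have Bbr: "is_branching T1 b1"
    unfolding is_branching_def
  proof (intro conjI Bor ballI)
    fix D assume D: "D \<in> tris T1"
    show "\<exists>r :: 'c \<Rightarrow> nat. inj_on r D \<and> (\<forall>x\<in>D. \<forall>y\<in>D. x \<noteq> y \<longrightarrow> ((x, y) \<in> b1 \<longleftrightarrow> r x < r y))"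
    proof (cases "D \<in> Oth")
      case True
      then have "D \<in> tris T" unfolding Oth_def by auto
      then obtain r :: "'c \<Rightarrow> nat" where r: "inj_on r D" "\<forall>x\<in>D. \<forall>y\<in>D. x \<noteq> y \<longrightarrow> ((x, y) \<in> b \<longleftrightarrow> r x < r y)"
        using br by blast
      have eqv: "\<forall>x\<in>D. \<forall>y\<in>D. x \<noteq> y \<longrightarrow> ((x, y) \<in> b1 \<longleftrightarrow> (x,y) \<in> b)"
      proof (intro ballI impI)
        fix x y assume xy: "x\<in>D" "y\<in>D" "x\<noteq>y"
        have "(x,y) \<in> darts T1 - E1 \<and> rho2 (x,y) = (x,y)" using othd[OF True, of "(x,y)"] xy by simp
        then show "(x, y) \<in> b1 \<longleftrightarrow> (x,y) \<in> b" using b1E by simp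
      qed
      show ?thesis
      proof (intro exI conjI)
        show "inj_on r D" by (rule r(1))
        show "\<forall>x\<in>D. \<forall>y\<in>D. x \<noteq> y \<longrightarrow> ((x, y) \<in> b1 \<longleftrightarrow> r x < r y)" using r(2) eqv by simp
      qed
    next
      case False
      then have "D = X \<or> D = Y" using D trisT1 by auto
      then show ?thesis
      proof
        assume DX: "D = X"
        show ?thesis unfolding DX X_def
          by (rule tri_branch) (use neq b1v b1d ob in auto)
      next
        assume DY: "D = Y"
        show ?thesis unfolding DY Y_def
          by (rule tri_branch) (use neq b1v b1d ob amb in auto)
      qed
    qed
  qed
  have XY: "X \<notin> Oth" "Y \<notin> Oth" using oth unfolding X_def Y_def by blast+
  have flip1: "b_flip T b T1 b1"
    unfolding b_flip_def
  proof (intro exI conjI)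
    show "e \<in> darts T" by fact
    show "\<not> trapped T e" by fact
    show "is_branching T1 b1" by fact
    show "\<forall>w\<in>darts T - edge_darts T e. (w \<in> b) = (rho w \<in> b1)"
      unfolding edE using F1 b1E by auto
    show "naked_flip T e T1 rho"
      unfolding naked_flip_def
      apply (rule exI[of _ p], rule exI[of _ q], rule exI[of _ a], rule exI[of _ c], rule exI[of _ p'], rule exI[of _ q'])
      apply (rule exI[of _ a], rule exI[of _ p], rule exI[of _ c], rule exI[of _ q], rule exI[of _ p'], rule exI[of _ q'])
    proof (intro conjI)
      show "\<forall>w\<in>darts T - edge_darts T e. glue T1 (rho w) = rho (glue T w)"
        unfolding edE using F1 g1E trisT1 by auto
      show "e = (p,q)" by fact
      show "{a,p,q} \<in> tris T" "{c,p',q'} \<in> tris T" using A C Aeq Ceq by auto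
      show "a \<notin> {p,q}" "c \<notin> {p',q'}" "p \<noteq> q" using Aeq Ceq neq by auto
      show "glue T (p,q) = (p',q')" by fact
      show "{a,p,q} \<noteq> {c,p',q'}" using AC Aeq Ceq by simp
      show "distinct [a,p,c,q,p',q']" using neq by simp
      show "{a,p,c,q,p',q'} \<inter> \<Union>(tris T - {{a,p,q},{c,p',q'}}) = {}"
      proof -
        have "tris T - {{a,p,q},{c,p',q'}} = Oth" unfolding Oth_def Aeq(1)[symmetric] Ceq(1)[symmetric] ..
        moreover have "x \<notin> \<Union>Oth" if "x \<in> {a,p,c,q,p',q'}" for x
        proof
          assume "x \<in> \<Union>Oth"
          then obtain D where "D \<in> Oth" "x \<in> D" by blast
          from oth[OF this] that show False by simp
        qed
        ultimately show ?thesis by blast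
      qed
      show "tris T1 = (tris T - {{a,p,q},{c,p',q'}}) \<union> {{a,p,c},{q,p',q'}}"
        unfolding trisT1 Oth_def Aeq(1)[symmetric] Ceq(1)[symmetric] X_def Y_def ..
      show "rho = flip_ren a p q c p' q' a p c q p' q'" by (rule rho_def)
      show "glue T1 (a,c) = (q,q')" "glue T1 (c,a) = (q',q)" "glue T1 (q,q') = (a,c)" "glue T1 (q',q) = (c,a)"
        unfolding trisT1 g1_def using neq by simp_all
    qed
  qed
  have flip2: "b_flip T1 b1 T (reverse_edge T b e)"
    unfolding b_flip_def
  proof (intro exI conjI)
    show "(a,c) \<in> darts T1" using E1d unfolding E1_def by auto
    show "\<not> trapped T1 (a,c)"
    proof
      assume "trapped T1 (a,c)"
      then obtain D where D: "D \<in> Oth \<union> {X,Y}" "a \<in> D" "q \<in> D"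
        unfolding trapped_def trisT1 g1_def by auto
      show False
      proof (cases "D \<in> Oth")
        case True then show False using oth[OF True D(2)] by simp
      next
        case False then have "D = X \<or> D = Y" using D(1) by blast
        then show False using D neq unfolding X_def Y_def by auto
      qed
    qed
    show "is_branching T (reverse_edge T b e)" using assms(4) unfolding ambiguous_def .
    have ed1: "edge_darts T1 (a,c) = E1" unfolding edge_darts_def trisT1 E1_def g1_def by auto
    show "\<forall>w\<in>darts T1 - edge_darts T1 (a,c). (w \<in> b1) = (rho2 w \<in> reverse_edge T b e)"
      unfolding ed1 reverse_edge_def edE using F2 b1E by auto
    show "naked_flip T1 (a,c) T rho2"
      unfolding naked_flip_def
      apply (rule exI[of _ a], rule exI[of _ c], rule exI[of _ p], rule exI[of _ p'], rule exI[of _ q], rule exI[of _ q'])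
      apply (rule exI[of _ p], rule exI[of _ a], rule exI[of _ q], rule exI[of _ p'], rule exI[of _ c], rule exI[of _ q'])
    proof (intro conjI)
      show "\<forall>w\<in>darts T1 - edge_darts T1 (a,c). glue T (rho2 w) = rho2 (glue T1 w)"
        unfolding ed1
      proof
        fix w assume w: "w \<in> darts T1 - E1"
        have u: "rho2 w \<in> darts T - E" using F2 w by auto
        have "glue T1 w = rho (glue T (rho2 w))" using g1E w trisT1 by auto
        then show "glue T (rho2 w) = rho2 (glue T1 w)" using F1[OF F3[OF u]] by simp
      qed
      have sets: "{p,a,c} = X" "{p',q,q'} = Y" "{p,a,q} = A" "{p',c,q'} = C"
        unfolding X_def Y_def Aeq(1) Ceq(1) by blast+
      have T1O: "tris T1 - {X,Y} = Oth" using XY unfolding trisT1 by blast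
      show "tris T = tris T1 - {{p, a, c}, {p', q, q'}} \<union> {{p, a, q}, {p', c, q'}}"
        unfolding sets T1O by (rule trisT)
      show "{p, a, q, p', c, q'} \<inter> \<Union> (tris T1 - {{p, a, c}, {p', q, q'}}) = {}"
        unfolding sets(1,2) T1O
      proof -
        have "x \<notin> \<Union>Oth" if "x \<in> {p,a,q,p',c,q'}" for x
        proof
          assume "x \<in> \<Union>Oth"
          then obtain D where "D \<in> Oth" "x \<in> D" by blast
          from oth[OF this] that show False by simp
        qed
        then show "{p,a,q,p',c,q'} \<inter> \<Union>Oth = {}" by blast
      qed
      show "(a,c) = (a,c)" ..
      show "{p,a,c} \<in> tris T1" "{p',q,q'} \<in> tris T1" unfolding sets trisT1 by auto
      show "p \<notin> {a,c}" "p' \<notin> {q,q'}" "a \<noteq> c" using neq by auto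
      show "glue T1 (a,c) = (q,q')" unfolding trisT1 g1_def by simp
      show "{p,a,c} \<noteq> {p',q,q'}"
      proof
        assume "{p,a,c} = {p',q,q'}"
        then have "p \<in> {p',q,q'}" by blast
        then show False using neq by simp
      qed
      show "distinct [p,a,q,p',c,q']" using neq by simp
      show "rho2 = flip_ren p a c p' q q' p a q p' c q'" by (rule rho2_def)
      show "glue T (p,q) = (p',q')" "glue T (q,p) = (q',p')" "glue T (p',q') = (p,q)" "glue T (q',p') = (q,p)"
        by fact+
    qed
  qed
  show ?thesis using flip1 flip2 by blast
qed

end
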